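(* Let $\mathcal{A}$ and $\mathcal{B}$ be $C^{*}$-algebras, let $\Xi$ be a Hilbert $\mathcal{A}$-module and $\nabla$ a Hilbert $\mathcal{B}$-module. Let $p>3$, let $\theta$ be a nonnegative real number and let $f:\Xi\rightarrow\nabla$ be a mapping such that $$\| f(\mu x+y)-\mu f(x)-f(y)\| \leq \theta\left(\|x\|^{p}+\|y\|^{p}\right),$$ $$\| f(\langle x,y\rangle z)-\langle f(x),f(y)\rangle f(z)\| \leq \theta\left(\|x\|^{p}+\|y\|^{p}+\|z\|^{p}\right),$$ $$\| f(\langle x,y\rangle^{*} z)-\langle f(x),f(y)\rangle^{*} f(z)\| \leq \theta\left(\|x\|^{p}+\|y\|^{p}+\|z\|^{p}\right)$$ for all $x,y,z\in\Xi$ and all $\mu\in\mathbb{T}$. Then there exists a unique Hilbert $C^{*}$-module $\ast$-homomorphism $H:\Xi\rightarrow\nabla$ such that $$\|f(x)-H(x)\|\leq \frac{2\theta}{2^{p}-2^{3}}\|x\|^{p}$$ for all $x\in\Xi$.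
   Context: $\mathbb{T}=\{z\in\mathbb{C}:|z|=1\}$. For a $C^{*}$-algebra $\mathcal{A}$, a (left) Hilbert $\mathcal{A}$-module is a complex linear space $\Xi$ with a compatible left $\mathcal{A}$-module action ($\lambda(ax)=(\lambda a)x=a(\lambda x)$) and a map $\langle\cdot,\cdot\rangle:\Xi\times\Xi\to\mathcal{A}$ that is linear in the first variable, satisfies $\langle ax,y\rangle=a\langle x,y\rangle$, $\langle x,y\rangle^{*}=\langle y,x\rangle$, $\langle x,x\rangle\geq 0$ with equality iff $x=0$, and such that $\Xi$ is complete in the norm $\|x\|=\|\langle x,x\rangle\|^{1/2}$. For a Hilbert $\mathcal{A}$-module $\Xi$ and a Hilbert $\mathcal{B}$-module $\nabla$, a Hilbert $C^{*}$-module homomorphism is a $\mathbb{C}$-linear map $H:\Xi\to\nabla$ with $H(\langle x,y\rangle z)=\langle H(x),H(y)\rangle H(z)$ for all $x,y,z\in\Xi$; it is a Hilbert $C^{*}$-module $\ast$-homomorphism if moreover $H(\langle x,y\rangle^{*} z)=\langle H(x),H(y)\rangle^{*} H(z)$ for all $x,y,z\in\Xi$. *)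

theory Defs
  imports "HOL-Analysis.Analysis"
begin

text \<open>A C*-algebra is modelled on a type 'a of class real_normed_algebra and banach
(complete normed, possibly non-unital, real algebra with submultiplicative norm),
together with a complex scalar multiplication extending the real one and an involution.\<close>

record 'a cstar_ops =
  cscale :: "complex \<Rightarrow> 'a \<Rightarrow> 'a"
  cstar  :: "'a \<Rightarrow> 'a"

definition cstar_algebra :: "('a::{real_normed_algebra,banach}) cstar_ops \<Rightarrow> bool" where
  "cstar_algebra A \<longleftrightarrow>
     (\<forall>r x. cscale A (complex_of_real r) x = r *\<^sub>R x) \<and>
     (\<forall>a b x. cscale A (a + b) x = cscale A a x + cscale A b x) \<and>
     (\<forall>a x y. cscale A a (x + y) = cscale A a x + cscale A a y) \<and>
     (\<forall>a b x. cscale A (a * b) x = cscale A a (cscale A b x)) \<and>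
     (\<forall>a x. norm (cscale A a x) = cmod a * norm x) \<and>
     (\<forall>a x y. cscale A a (x * y) = cscale A a x * y) \<and>
     (\<forall>a x y. cscale A a (x * y) = x * cscale A a y) \<and>
     (\<forall>x y. cstar A (x + y) = cstar A x + cstar A y) \<and>
     (\<forall>a x. cstar A (cscale A a x) = cscale A (cnj a) (cstar A x)) \<and>
     (\<forall>x y. cstar A (x * y) = cstar A y * cstar A x) \<and>
     (\<forall>x. cstar A (cstar A x) = x) \<and>
     (\<forall>x. norm (cstar A x * x) = (norm x)\<^sup>2)"

definition cstar_positive :: "('a::{real_normed_algebra,banach}) cstar_ops \<Rightarrow> 'a \<Rightarrow> bool" where
  "cstar_positive A a \<longleftrightarrow> (\<exists>b. a = cstar A b * b)"

record ('a, 'x) hmod_ops =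
  hscale :: "complex \<Rightarrow> 'x \<Rightarrow> 'x"
  hact   :: "'a \<Rightarrow> 'x \<Rightarrow> 'x"
  hip    :: "'x \<Rightarrow> 'x \<Rightarrow> 'a"

definition hilbert_module ::
  "('a::{real_normed_algebra,banach}) cstar_ops \<Rightarrow> ('a, 'x::banach) hmod_ops \<Rightarrow> bool" where
  "hilbert_module A M \<longleftrightarrow>
     cstar_algebra A \<and>
     \<comment> \<open>complex linear space structure (extending the real one of 'x)\<close>
     (\<forall>r x. hscale M (complex_of_real r) x = r *\<^sub>R x) \<and>
     (\<forall>a b x. hscale M (a + b) x = hscale M a x + hscale M b x) \<and>
     (\<forall>a x y. hscale M a (x + y) = hscale M a x + hscale M a y) \<and>
     (\<forall>a b x. hscale M (a * b) x = hscale M a (hscale M b x)) \<and>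
     \<comment> \<open>left A-module\<close>
     (\<forall>a b x. hact M (a + b) x = hact M a x + hact M b x) \<and>
     (\<forall>a x y. hact M a (x + y) = hact M a x + hact M a y) \<and>
     (\<forall>a b x. hact M (a * b) x = hact M a (hact M b x)) \<and>
     \<comment> \<open>compatibility: lambda (a x) = (lambda a) x = a (lambda x)\<close>
     (\<forall>l a x. hscale M l (hact M a x) = hact M (cscale A l a) x) \<and>
     (\<forall>l a x. hscale M l (hact M a x) = hact M a (hscale M l x)) \<and>
     \<comment> \<open>inner product\<close>
     (\<forall>x y z. hip M (x + y) z = hip M x z + hip M y z) \<and>
     (\<forall>l x y. hip M (hscale M l x) y = cscale A l (hip M x y)) \<and>
     (\<forall>a x y. hip M (hact M a x) y = a * hip M x y) \<and>
     (\<forall>x y. cstar A (hip M x y) = hip M y x) \<and>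
     (\<forall>x. cstar_positive A (hip M x x)) \<and>
     (\<forall>x. hip M x x = 0 \<longleftrightarrow> x = 0) \<and>
     \<comment> \<open>the norm of 'x (complete, by class banach) is the Hilbert module norm\<close>
     (\<forall>x. norm x = sqrt (norm (hip M x x)))"

definition hmod_hom ::
  "('a::{real_normed_algebra,banach}, 'x::banach) hmod_ops \<Rightarrow>
   ('b::{real_normed_algebra,banach}, 'y::banach) hmod_ops \<Rightarrow> ('x \<Rightarrow> 'y) \<Rightarrow> bool" where
  "hmod_hom M N H \<longleftrightarrow>
     (\<forall>x y. H (x + y) = H x + H y) \<and>
     (\<forall>l x. H (hscale M l x) = hscale N l (H x)) \<and>
     (\<forall>x y z. H (hact M (hip M x y) z) = hact N (hip N (H x) (H y)) (H z))"

definition hmod_star_hom ::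
  "('a::{real_normed_algebra,banach}) cstar_ops \<Rightarrow> ('a, 'x::banach) hmod_ops \<Rightarrow>
   ('b::{real_normed_algebra,banach}) cstar_ops \<Rightarrow> ('b, 'y::banach) hmod_ops \<Rightarrow> ('x \<Rightarrow> 'y) \<Rightarrow> bool" where
  "hmod_star_hom A M B N H \<longleftrightarrow>
     hmod_hom M N H \<and>
     (\<forall>x y z. H (hact M (cstar A (hip M x y)) z) = hact N (cstar B (hip N (H x) (H y))) (H z))"

end

theory Submission
  imports Defs
begin


locale hm =
  fixes A :: "('a::{real_normed_algebra,banach}) cstar_ops"
    and M :: "('a, 'x::banach) hmod_ops"
  assumes hmod: "hilbert_module A M"
begin

lemmas axA = hmod[unfolded hilbert_module_def, THEN conjunct1, unfolded cstar_algebra_def]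
lemmas ax = hmod[unfolded hilbert_module_def, THEN conjunct2]

lemma cscale_real: "cscale A (complex_of_real r) a = r *\<^sub>R a" using axA by metis
lemma cscale_addl: "cscale A (c + d) a = cscale A c a + cscale A d a" using axA by metis
lemma cscale_addr: "cscale A c (a + b) = cscale A c a + cscale A c b" using axA by metis
lemma cscale_mult: "cscale A (c * d) a = cscale A c (cscale A d a)" using axA by metis
lemma cscale_norm: "norm (cscale A c a) = cmod c * norm a" using axA by metis
lemma cstar_add: "cstar A (a + b) = cstar A a + cstar A b" using axA by metis
lemma cstar_cscale: "cstar A (cscale A c a) = cscale A (cnj c) (cstar A a)" using axA by metis
lemma cstar_mult: "cstar A (a * b) = cstar A b * cstar A a" using axA by metis
lemma cstar_cstar: "cstar A (cstar A a) = a" using axA by metis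
lemma cstar_id: "norm (cstar A a * a) = (norm a)\<^sup>2" using axA by metis
lemma hscale_real: "hscale M (complex_of_real r) x = r *\<^sub>R x" using ax by metis
lemma hscale_addl: "hscale M (c + d) x = hscale M c x + hscale M d x" using ax by metis
lemma hscale_addr: "hscale M c (x + y) = hscale M c x + hscale M c y" using ax by metis
lemma hscale_mult: "hscale M (c * d) x = hscale M c (hscale M d x)" using ax by metis
lemma hact_addl: "hact M (a + b) x = hact M a x + hact M b x" using ax by metis
lemma hact_addr: "hact M a (x + y) = hact M a x + hact M a y" using ax by metis
lemma hscale_hact1: "hscale M c (hact M a x) = hact M (cscale A c a) x" using ax by metis
lemma hscale_hact2: "hscale M c (hact M a x) = hact M a (hscale M c x)" using ax by metis
lemma hip_addl: "hip M (x + y) z = hip M x z + hip M y z" using ax by metis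
lemma hip_hscalel: "hip M (hscale M c x) y = cscale A c (hip M x y)" using ax by metis
lemma hip_hactl: "hip M (hact M a x) y = a * hip M x y" using ax by metis
lemma hip_cstar: "cstar A (hip M x y) = hip M y x" using ax by metis
lemma hip_norm: "norm x = sqrt (norm (hip M x x))" using ax by metis

lemma cscale_one: "cscale A 1 a = a"
  using cscale_real[of 1 a] by simp

lemma hscale_one: "hscale M 1 x = x"
  using hscale_real[of 1 x] by simp

lemma cstar_scaleR: "cstar A (r *\<^sub>R a) = r *\<^sub>R cstar A a"
  by (metis cscale_real cstar_cscale complex_cnj_complex_of_real)

lemma cstar_zero: "cstar A 0 = 0"
  using cstar_scaleR[of 0 0] by simp

lemma cstar_norm_le: "norm a \<le> norm (cstar A a)"
proof (cases "norm a = 0")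
  case True then show ?thesis by simp
next
  case False
  then have pos: "norm a > 0" by simp
  have "norm a * norm a = norm (cstar A a * a)" using cstar_id[of a] by (simp add: power2_eq_square)
  also have "\<dots> \<le> norm (cstar A a) * norm a" by (rule norm_mult_ineq)
  finally show ?thesis using pos by (meson mult_le_cancel_right_pos)
qed

lemma cstar_norm: "norm (cstar A a) = norm a"
  using cstar_norm_le[of a] cstar_norm_le[of "cstar A a"] cstar_cstar[of a] by simp

lemma hip_self_norm: "norm (hip M x x) = (norm x)\<^sup>2"
  using hip_norm[of x] by simp

lemma hip_addr: "hip M x (y + z) = hip M x y + hip M x z"
  by (metis hip_cstar hip_addl cstar_add)

lemma hip_hscaler: "hip M x (hscale M c y) = cscale A (cnj c) (hip M x y)"
  by (metis hip_cstar hip_hscalel cstar_cscale)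

lemma hip_scaleRl: "hip M (r *\<^sub>R x) y = r *\<^sub>R hip M x y"
  by (metis hscale_real hip_hscalel cscale_real)

lemma hip_scaleRr: "hip M x (r *\<^sub>R y) = r *\<^sub>R hip M x y"
  by (metis hscale_real hip_hscaler cscale_real complex_cnj_complex_of_real)

lemma hact_scaleRl: "hact M (r *\<^sub>R a) x = r *\<^sub>R hact M a x"
  by (metis hscale_real hscale_hact1 cscale_real)

lemma hact_scaleRr: "hact M a (r *\<^sub>R x) = r *\<^sub>R hact M a x"
  by (metis hscale_real hscale_hact2)

lemma hscale_scaleR: "hscale M c (r *\<^sub>R x) = r *\<^sub>R hscale M c x"
  by (metis hscale_real hscale_mult mult.commute)

lemma hscale_norm: "norm (hscale M c x) = cmod c * norm x"
proof -
  have "(norm (hscale M c x))\<^sup>2 = norm (hip M (hscale M c x) (hscale M c x))"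
    by (simp add: hip_self_norm)
  also have "\<dots> = cmod c * (cmod c * (norm x)\<^sup>2)"
    by (simp add: hip_hscalel hip_hscaler cscale_norm hip_self_norm)
  also have "\<dots> = (cmod c * norm x)\<^sup>2" by (simp add: power2_eq_square)
  finally show ?thesis
    by (meson norm_ge_zero mult_nonneg_nonneg power2_eq_imp_eq)
qed

lemma hact_norm: "norm (hact M a w) \<le> norm a * norm w"
proof -
  have e: "hip M w (hact M a w) = hip M w w * cstar A a"
    by (metis hip_cstar hip_hactl cstar_mult)
  have "(norm (hact M a w))\<^sup>2 = norm (a * (hip M w w * cstar A a))"
    by (simp add: hip_self_norm[symmetric] hip_hactl e)
  also have "\<dots> \<le> norm a * (norm (hip M w w) * norm (cstar A a))"
    by (meson norm_mult_ineq order_trans mult_left_mono norm_ge_zero)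
  also have "\<dots> = (norm a * norm w)\<^sup>2"
    by (simp add: cstar_norm hip_self_norm power2_eq_square)
  finally show ?thesis
    by (meson norm_ge_zero mult_nonneg_nonneg power2_le_imp_le)
qed

lemma hip_zerol: "hip M 0 y = 0"
  using hip_scaleRl[of 0 0 y] by simp

lemma hip_zeror: "hip M x 0 = 0"
  using hip_scaleRr[of x 0 0] by simp

lemma hip_bound1: "norm (hip M u v) \<le> 2 * (norm u + norm v)\<^sup>2"
proof -
  have S: "\<And>u v. hip M u v + hip M v u = hip M (u + v) (u + v) - hip M u u - hip M v v"
    by (simp add: hip_addl hip_addr algebra_simps)
  have Sb: "\<And>u v. norm (hip M u v + hip M v u) \<le> 2 * (norm u + norm v)\<^sup>2"
  proof -
    fix u v :: 'x
    have "norm (hip M u v + hip M v u) \<le> norm (hip M (u + v) (u + v)) + norm (hip M u u) + norm (hip M v v)"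
      unfolding S by (meson norm_triangle_ineq4 add_right_mono order_trans)
    also have "\<dots> = (norm (u+v))\<^sup>2 + (norm u)\<^sup>2 + (norm v)\<^sup>2" by (simp add: hip_self_norm)
    also have "\<dots> \<le> (norm u + norm v)\<^sup>2 + (norm u)\<^sup>2 + (norm v)\<^sup>2"
      by (simp add: norm_triangle_ineq power_mono)
    also have "\<dots> \<le> 2 * (norm u + norm v)\<^sup>2" by (simp add: power2_eq_square algebra_simps)
    finally show "norm (hip M u v + hip M v u) \<le> 2 * (norm u + norm v)\<^sup>2" .
  qed
  define j where "j = hscale M \<i> v"
  have nj: "norm j = norm v" by (simp add: j_def hscale_norm)
  have c1: "cscale A \<i> (cscale A (- \<i>) a) = a" for a
  proof -
    have "cscale A \<i> (cscale A (- \<i>) a) = cscale A 1 a"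
      by (simp add: cscale_mult[symmetric])
    then show ?thesis by (simp add: cscale_one)
  qed
  have c2: "cscale A \<i> (cscale A \<i> a) = - a" for a
  proof -
    have "cscale A \<i> (cscale A \<i> a) = cscale A (complex_of_real (-1)) a"
      by (simp add: cscale_mult[symmetric])
    then show ?thesis using cscale_real[of "-1" a] by simp
  qed
  have e: "cscale A \<i> (hip M u j + hip M j u) = hip M u v - hip M v u"
    by (simp add: j_def cscale_addr hip_hscaler hip_hscalel c1 c2)
  have "2 *\<^sub>R hip M u v = (hip M u v + hip M v u) + cscale A \<i> (hip M u j + hip M j u)"
    unfolding e by (simp add: scaleR_2)
  then have "2 * norm (hip M u v) \<le> norm (hip M u v + hip M v u) + norm (cscale A \<i> (hip M u j + hip M j u))"
    by (metis norm_scaleR abs_numeral norm_triangle_ineq)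
  also have "\<dots> \<le> 2 * (norm u + norm v)\<^sup>2 + 2 * (norm u + norm j)\<^sup>2"
    using Sb[of u v] Sb[of u j] by (simp add: cscale_norm)
  finally show ?thesis using nj by simp
qed

lemma hip_bound: "norm (hip M u v) \<le> norm u * norm v * 8"
proof (cases "u = 0 \<or> v = 0")
  case True then show ?thesis by (auto simp: hip_zerol hip_zeror)
next
  case False
  define u' where "u' = (1 / norm u) *\<^sub>R u"
  define v' where "v' = (1 / norm v) *\<^sub>R v"
  have nu: "norm u' = 1" "norm v' = 1" using False by (simp_all add: u'_def v'_def)
  have "hip M u v = hip M (norm u *\<^sub>R u') (norm v *\<^sub>R v')"
    using False by (simp add: u'_def v'_def)
  also have "\<dots> = (norm u * norm v) *\<^sub>R hip M u' v'"
    by (simp add: hip_scaleRl hip_scaleRr)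
  finally have "norm (hip M u v) = norm u * norm v * norm (hip M u' v')" by simp
  also have "\<dots> \<le> norm u * norm v * 8"
    using hip_bound1[of u' v'] nu by (intro mult_left_mono) auto
  finally show ?thesis .
qed

lemma bb_hip: "bounded_bilinear (hip M)"
  apply unfold_locales
  apply (simp_all add: hip_addl hip_addr hip_scaleRl hip_scaleRr)
  using hip_bound by blast

lemma bb_hact: "bounded_bilinear (hact M)"
  apply unfold_locales
  apply (simp_all add: hact_addl hact_addr hact_scaleRl hact_scaleRr)
  using hact_norm by (metis mult.right_neutral)

lemma bl_hscale: "bounded_linear (hscale M c)"
  by (rule bounded_linear_intro[where K="cmod c"]) (simp_all add: hscale_addr hscale_scaleR hscale_norm mult.commute)

definition tri :: "'x \<Rightarrow> 'x \<Rightarrow> 'x \<Rightarrow> 'x" where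
  "tri x y z = hact M (hip M x y) z"

lemma tri_scale: "tri (r *\<^sub>R x) (r *\<^sub>R y) (r *\<^sub>R z) = (r ^ 3) *\<^sub>R tri x y z"
  by (simp add: tri_def hip_scaleRl hip_scaleRr hact_scaleRl hact_scaleRr power3_eq_cube)

lemma tri_tendsto:
  assumes "X \<longlonglongrightarrow> x" "Y \<longlonglongrightarrow> y" "Z \<longlonglongrightarrow> z"
  shows "(\<lambda>n. tri (X n) (Y n) (Z n)) \<longlonglongrightarrow> tri x y z"
  unfolding tri_def
  by (rule bounded_bilinear.tendsto[OF bb_hact bounded_bilinear.tendsto[OF bb_hip assms(1,2)] assms(3)])

lemma tri_star: "hact M (cstar A (hip M x y)) z = tri y x z"
  by (simp add: tri_def hip_cstar)

end




lemma null_geom: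
  fixes X :: "nat \<Rightarrow> 'a::real_normed_vector"
  assumes "\<And>n. norm (X n) \<le> K * r ^ n" "0 \<le> r" "r < 1"
  shows "X \<longlonglongrightarrow> 0"
proof (rule Lim_null_comparison)
  show "\<forall>\<^sub>F n in sequentially. norm (X n) \<le> K * r ^ n" using assms(1) by simp
  have "(\<lambda>n. r ^ n) \<longlonglongrightarrow> 0" using assms(2,3) by (intro LIMSEQ_power_zero) simp
  then show "(\<lambda>n. K * r ^ n) \<longlonglongrightarrow> 0" by (rule tendsto_mult_right_zero)
qed

lemma zero_geom:
  fixes c :: "'a::real_normed_vector"
  assumes "\<And>n. norm c \<le> K * r ^ n" "0 \<le> r" "r < 1"
  shows "c = 0"
proof -
  have "(\<lambda>n. c) \<longlonglongrightarrow> 0" by (rule null_geom[OF assms])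
  then show ?thesis by (simp add: LIMSEQ_const_iff)
qed

lemma add_nat:
  fixes h :: "'a::real_vector \<Rightarrow> 'b::real_vector"
  assumes "\<And>x y. h (x + y) = h x + h y"
  shows "h (real m *\<^sub>R x) = real m *\<^sub>R h x"
proof (induction m)
  case 0
  have "h 0 = h 0 + h 0" using assms[of 0 0] by simp
  then show ?case by simp
next
  case (Suc m)
  have "h (real (Suc m) *\<^sub>R x) = h (x + real m *\<^sub>R x)" by (simp add: algebra_simps)
  also have "\<dots> = real (Suc m) *\<^sub>R h x" using assms Suc by (simp add: algebra_simps)
  finally show ?case .
qed

lemma add_pow2:
  fixes h :: "'a::real_vector \<Rightarrow> 'b::real_vector"
  assumes "\<And>x y. h (x + y) = h x + h y"
  shows "h x = (2 ^ n) *\<^sub>R h ((1 / 2 ^ n) *\<^sub>R x)"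
proof -
  have "h x = h (real (2 ^ n) *\<^sub>R ((1 / 2 ^ n) *\<^sub>R x))" by (simp add: scaleR_scaleR)
  also have "\<dots> = (2 ^ n) *\<^sub>R h ((1 / 2 ^ n) *\<^sub>R x)" by (subst add_nat[OF assms]) simp
  finally show ?thesis .
qed


lemma aux2: "(Q::real) \<noteq> 0 \<Longrightarrow> T * (c * (a / Q + b / Q)) = c * (a + b) * (T / Q)"
  by (simp add: field_simps)
lemma aux1z: "(Q::real) \<noteq> 0 \<Longrightarrow> T * (c * (a / Q + 0)) = c * a * (T / Q)"
  by (simp add: field_simps)
lemma aux3: "(Q::real) \<noteq> 0 \<Longrightarrow> T * (c * (a / Q + b / Q + d / Q)) = c * (a + b + d) * (T / Q)"
  by (simp add: field_simps)
lemma auxu: "(Q::real) \<noteq> 0 \<Longrightarrow> T * (2 * C * (a / Q)) = 2 * C * a * (T / Q)"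
  by (simp add: field_simps)

lemma norm_pow_scale:
  assumes "p > 0"
  shows "norm ((1 / 2 ^ n) *\<^sub>R x) powr p = norm x powr p / (2 powr p) ^ n"
proof -
  have "norm ((1 / 2 ^ n) *\<^sub>R x) = norm x / 2 ^ n" by simp
  moreover have "((2::real) ^ n) powr p = (2 powr p) ^ n"
    by (simp add: powr_realpow[symmetric] powr_powr powr_power mult.commute)
  ultimately show ?thesis by (simp add: powr_divide)
qed




locale stab = hA: hm A M + hB: hm B N
  for A :: "('a::{real_normed_algebra,banach}) cstar_ops" and M :: "('a,'x::banach) hmod_ops"
  and B :: "('b::{real_normed_algebra,banach}) cstar_ops" and N :: "('b,'y::banach) hmod_ops" +
  fixes f :: "'x \<Rightarrow> 'y" and p \<theta> :: real
  assumes p3: "p > 3" and th: "\<theta> \<ge> 0"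
  and h1: "\<forall>x y \<mu>. cmod \<mu> = 1 \<longrightarrow>
           norm (f (hscale M \<mu> x + y) - hscale N \<mu> (f x) - f y)
             \<le> \<theta> * (norm x powr p + norm y powr p)"
  and h2: "\<forall>x y z.
           norm (f (hact M (hip M x y) z) - hact N (hip N (f x) (f y)) (f z))
             \<le> \<theta> * (norm x powr p + norm y powr p + norm z powr p)"
begin

definition q :: real where "q = 2 powr p"

lemma q8: "q > 8"
proof -
  have "(2::real) powr 3 < 2 powr p" using p3 by (intro powr_less_mono) auto
  moreover have "(2::real) powr 3 = 8" by (simp add: powr_numeral)
  ultimately show ?thesis by (simp add: q_def)
qed

lemma npow: "norm ((1 / 2 ^ n) *\<^sub>R x) powr p = norm x powr p / q ^ n"
  using norm_pow_scale[of p n x] p3 by (simp add: q_def)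

definition g :: "nat \<Rightarrow> 'x \<Rightarrow> 'y" where "g n x = (2 ^ n) *\<^sub>R f ((1 / 2 ^ n) *\<^sub>R x)"

lemma f0: "f 0 = 0"
proof -
  have "norm (f (hscale M 1 0 + 0) - hscale N 1 (f 0) - f 0) \<le> \<theta> * (norm (0::'x) powr p + norm (0::'x) powr p)"
    using h1[rule_format, where x=0 and y=0 and \<mu>=1] by simp
  then show ?thesis by (simp add: hA.hscale_one hB.hscale_one)
qed

lemma dbl: "norm (f (u + u) - 2 *\<^sub>R f u) \<le> 2 * \<theta> * norm u powr p"
proof -
  have "norm (f (hscale M 1 u + u) - hscale N 1 (f u) - f u) \<le> \<theta> * (norm u powr p + norm u powr p)"
    using h1[rule_format, where x=u and y=u and \<mu>=1] by simp
  then show ?thesis by (simp add: hA.hscale_one hB.hscale_one scaleR_2 algebra_simps)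
qed

lemma dstep: "norm (g (Suc n) x - g n x) \<le> (\<theta> * norm x powr p * (2 / q)) * (2 / q) ^ n"
proof -
  define u where "u = (1 / 2 ^ Suc n) *\<^sub>R x"
  have uu: "(1 / 2 ^ n) *\<^sub>R x = u + u" by (simp add: u_def scaleR_2[symmetric])
  have gs: "g (Suc n) x = (2 ^ n) *\<^sub>R (2 *\<^sub>R f u)" by (simp add: g_def u_def)
  have gn: "g n x = (2 ^ n) *\<^sub>R f (u + u)" by (simp add: g_def uu)
  have "g (Suc n) x - g n x = - ((2 ^ n) *\<^sub>R (f (u + u) - 2 *\<^sub>R f u))"
    unfolding gs gn by (simp add: algebra_simps)
  then have "norm (g (Suc n) x - g n x) = 2 ^ n * norm (f (u + u) - 2 *\<^sub>R f u)" by simp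
  also have "\<dots> \<le> 2 ^ n * (2 * \<theta> * norm u powr p)" by (intro mult_left_mono dbl) auto
  also have "\<dots> = 2 ^ Suc n * \<theta> * norm x powr p / q ^ Suc n" unfolding u_def npow by simp
  also have "\<dots> = (\<theta> * norm x powr p * (2 / q)) * (2 / q) ^ n" by (simp add: power_divide)
  finally show ?thesis .
qed

lemma r_props: "0 \<le> 2 / q" "2 / q < 1" using q8 by auto

lemma d_summable: "summable (\<lambda>k. g (Suc k) x - g k x)" "summable (\<lambda>k. norm (g (Suc k) x - g k x))"
proof -
  have s: "summable (\<lambda>n. (\<theta> * norm x powr p * (2 / q)) * (2 / q) ^ n)"
    using r_props by (intro summable_mult summable_geometric) simp
  show "summable (\<lambda>k. g (Suc k) x - g k x)" by (rule summable_comparison_test'[OF s dstep])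
  show "summable (\<lambda>k. norm (g (Suc k) x - g k x))" by (rule summable_comparison_test'[OF s, where N=0]) (simp only: real_norm_def abs_norm_cancel dstep)
qed

definition H :: "'x \<Rightarrow> 'y" where "H x = f x + (\<Sum>k. g (Suc k) x - g k x)"

lemma glim: "(\<lambda>n. g n x) \<longlonglongrightarrow> H x"
proof -
  have "g n x = f x + (\<Sum>k<n. g (Suc k) x - g k x)" for n
  proof -
    have g0: "g 0 x = f x" by (simp add: g_def)
    show ?thesis using sum_lessThan_telescope[of "\<lambda>k. g k x" n] g0 by simp
  qed
  then have e: "(\<lambda>n. g n x) = (\<lambda>n. f x + (\<Sum>k<n. g (Suc k) x - g k x))" by (rule ext)
  have L: "(\<lambda>n. f x + (\<Sum>k<n. g (Suc k) x - g k x)) \<longlonglongrightarrow> H x"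
    unfolding H_def by (intro tendsto_add tendsto_const summable_LIMSEQ d_summable)
  show ?thesis using L[folded e] .
qed

lemma Hbound: "norm (f x - H x) \<le> 2 * \<theta> / (2 powr p - 2 ^ 3) * norm x powr p"
proof -
  have s: "summable (\<lambda>n. (\<theta> * norm x powr p * (2 / q)) * (2 / q) ^ n)"
    using r_props by (intro summable_mult summable_geometric) simp
  have "norm (f x - H x) = norm (\<Sum>k. g (Suc k) x - g k x)" by (simp add: H_def)
  also have "\<dots> \<le> (\<Sum>k. norm (g (Suc k) x - g k x))" by (rule summable_norm[OF d_summable(2)])
  also have "\<dots> \<le> (\<Sum>n. (\<theta> * norm x powr p * (2 / q)) * (2 / q) ^ n)"
    by (rule suminf_le[OF dstep d_summable(2) s])
  also have "\<dots> = (\<theta> * norm x powr p * (2 / q)) * (1 / (1 - 2 / q))"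
  proof -
    have n: "norm (2 / q) < 1" using r_props by simp
    have e1: "(\<Sum>n. (\<theta> * norm x powr p * (2 / q)) * (2 / q) ^ n) = (\<theta> * norm x powr p * (2 / q)) * (\<Sum>n. (2 / q) ^ n)"
      by (rule suminf_mult[OF summable_geometric[OF n]])
    show ?thesis by (simp only: e1 suminf_geometric[OF n])
  qed
  also have "\<dots> = 2 * \<theta> / (q - 2) * norm x powr p"
  proof -
    have "(2 / q) * (1 / (1 - 2 / q)) = 2 / (q - 2)" using q8 by (simp add: field_simps)
    then show ?thesis by (metis (no_types, lifting) mult.commute mult.left_commute times_divide_eq_right)
  qed
  also have "\<dots> \<le> 2 * \<theta> / (q - 8) * norm x powr p"
  proof -
    have "2 * \<theta> / (q - 2) \<le> 2 * \<theta> / (q - 8)" using q8 th by (intro divide_left_mono) auto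
    then show ?thesis by (rule mult_right_mono) simp
  qed
  finally have "norm (f x - H x) \<le> 2 * \<theta> / (q - 8) * norm x powr p" .
  moreover have "(2::real) powr p - 2 ^ 3 = q - 8" by (simp add: q_def)
  ultimately show ?thesis by (simp only:)
qed

end




context stab
begin

lemma H_add: "H (x + y) = H x + H y"
proof -
  have b: "norm (g n (x + y) - g n x - g n y) \<le> (\<theta> * (norm x powr p + norm y powr p)) * (2 / q) ^ n" for n
  proof -
    define u where "u = (1 / 2 ^ n) *\<^sub>R x"
    define v where "v = (1 / 2 ^ n) *\<^sub>R y"
    have "g n (x + y) - g n x - g n y = (2 ^ n) *\<^sub>R (f (hscale M 1 u + v) - hscale N 1 (f u) - f v)"
      by (simp add: g_def u_def v_def hA.hscale_one hB.hscale_one scaleR_add_right algebra_simps)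
    then have "norm (g n (x + y) - g n x - g n y) = 2 ^ n * norm (f (hscale M 1 u + v) - hscale N 1 (f u) - f v)"
      by simp
    also have "\<dots> \<le> 2 ^ n * (\<theta> * (norm u powr p + norm v powr p))"
      using h1[rule_format, where x=u and y=v and \<mu>=1] by (intro mult_left_mono) auto
    also have "\<dots> = (\<theta> * (norm x powr p + norm y powr p)) * (2 / q) ^ n"
      unfolding u_def v_def npow power_divide by (rule aux2) (use q8 in simp)
    finally show ?thesis .
  qed
  have "(\<lambda>n. g n (x + y) - g n x - g n y) \<longlonglongrightarrow> 0"
    by (rule null_geom[OF b r_props])
  moreover have "(\<lambda>n. g n (x + y) - g n x - g n y) \<longlonglongrightarrow> H (x + y) - H x - H y"
    by (intro tendsto_diff glim)
  ultimately have "H (x + y) - H x - H y = 0" using LIMSEQ_unique by blast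
  then show ?thesis by (simp add: algebra_simps)
qed

lemma H_unit:
  assumes "cmod \<mu> = 1"
  shows "H (hscale M \<mu> x) = hscale N \<mu> (H x)"
proof -
  have b: "norm (g n (hscale M \<mu> x) - hscale N \<mu> (g n x)) \<le> (\<theta> * norm x powr p) * (2 / q) ^ n" for n
  proof -
    define u where "u = (1 / 2 ^ n) *\<^sub>R x"
    have "g n (hscale M \<mu> x) - hscale N \<mu> (g n x) = (2 ^ n) *\<^sub>R (f (hscale M \<mu> u + 0) - hscale N \<mu> (f u) - f 0)"
      by (simp add: g_def u_def hA.hscale_scaleR hB.hscale_scaleR f0 algebra_simps)
    then have "norm (g n (hscale M \<mu> x) - hscale N \<mu> (g n x)) = 2 ^ n * norm (f (hscale M \<mu> u + 0) - hscale N \<mu> (f u) - f 0)"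
      by simp
    also have "\<dots> \<le> 2 ^ n * (\<theta> * (norm u powr p + norm (0::'x) powr p))"
      using h1[rule_format, where x=u and y=0 and \<mu>=\<mu>] assms by (intro mult_left_mono) auto
    also have "\<dots> = (\<theta> * norm x powr p) * (2 / q) ^ n"
      unfolding u_def npow power_divide norm_zero powr_0 by (rule aux1z) (use q8 p3 in simp)
    finally show ?thesis .
  qed
  have "(\<lambda>n. g n (hscale M \<mu> x) - hscale N \<mu> (g n x)) \<longlonglongrightarrow> 0"
    by (rule null_geom[OF b r_props])
  moreover have "(\<lambda>n. g n (hscale M \<mu> x) - hscale N \<mu> (g n x)) \<longlonglongrightarrow> H (hscale M \<mu> x) - hscale N \<mu> (H x)"
    by (intro tendsto_diff glim bounded_linear.tendsto[OF hB.bl_hscale])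
  ultimately have "H (hscale M \<mu> x) - hscale N \<mu> (H x) = 0" using LIMSEQ_unique by blast
  then show ?thesis by simp
qed

lemma two_units:
  assumes "cmod l \<le> 2"
  shows "\<exists>\<mu> \<nu>. cmod \<mu> = 1 \<and> cmod \<nu> = 1 \<and> l = \<mu> + \<nu>"
proof (cases "l = 0")
  case True
  then show ?thesis by (intro exI[of _ 1] exI[of _ "-1"]) simp
next
  case False
  define r where "r = cmod l"
  define e where "e = l / complex_of_real r"
  define a where "a = r / 2"
  define w where "w = Complex a (sqrt (1 - a\<^sup>2))"
  have r0: "r > 0" using False by (simp add: r_def)
  have a01: "0 \<le> a" "a \<le> 1" using r0 assms by (auto simp: a_def r_def)
  have "a\<^sup>2 \<le> 1" using a01 by (simp add: power_le_one)
  then have w1: "cmod w = 1" by (simp add: w_def cmod_def)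
  have e1: "cmod e = 1" using r0 by (simp add: e_def r_def norm_divide)
  have ww: "w + cnj w = complex_of_real r"
    by (simp add: w_def a_def complex_eq_iff)
  have "l = e * complex_of_real r" using r0 by (simp add: e_def)
  also have "\<dots> = e * w + e * cnj w" by (simp add: ww[symmetric] distrib_left)
  finally show ?thesis
    by (intro exI[of _ "e * w"] exI[of _ "e * cnj w"]) (simp add: norm_mult e1 w1)
qed

lemma H_nat: "H (real m *\<^sub>R x) = real m *\<^sub>R H x"
  by (rule add_nat) (rule H_add)

lemma H_lin: "H (hscale M l x) = hscale N l (H x)"
proof -
  define m :: nat where "m = nat (ceiling (cmod l)) + 1"
  have "m \<ge> 1" by (simp add: m_def)
  then have m0: "real m \<ge> 1" by simp
  have ml: "cmod l \<le> real m"
  proof -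
    have "real (nat \<lceil>cmod l\<rceil>) \<le> real m" by (simp add: m_def)
    then show ?thesis using real_nat_ceiling_ge[of "cmod l"] by linarith
  qed
  define l' where "l' = l / of_nat m"
  have l2: "cmod l' \<le> 2" using m0 ml by (simp add: l'_def norm_divide divide_le_eq)
  obtain \<mu> \<nu> where u: "cmod \<mu> = 1" "cmod \<nu> = 1" "l' = \<mu> + \<nu>" using two_units[OF l2] by blast
  have small: "H (hscale M l' y) = hscale N l' (H y)" for y
    by (simp add: u(3) hA.hscale_addl hB.hscale_addl H_add H_unit[OF u(1)] H_unit[OF u(2)])
  have ll: "l = complex_of_real (real m) * l'" using m0 by (simp add: l'_def)
  show ?thesis
    by (simp only: ll hA.hscale_mult hB.hscale_mult hA.hscale_real hB.hscale_real H_nat small)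
qed

lemma H_tri: "H (hA.tri x y z) = hB.tri (H x) (H y) (H z)"
proof -
  have b: "norm (g (3 * n) (hA.tri x y z) - hB.tri (g n x) (g n y) (g n z))
      \<le> (\<theta> * (norm x powr p + norm y powr p + norm z powr p)) * (8 / q) ^ n" for n
  proof -
    define u where "u = (1 / 2 ^ n) *\<^sub>R x"
    define v where "v = (1 / 2 ^ n) *\<^sub>R y"
    define w where "w = (1 / 2 ^ n) *\<^sub>R z"
    have p3n: "(2::real) ^ (3 * n) = (2 ^ n) ^ 3" by (metis power_mult mult.commute)
    have p8: "((2::real) ^ n) ^ 3 = 8 ^ n"
    proof -
      have "((2::real) ^ n) ^ 3 = (2 ^ 3) ^ n" by (metis power_mult mult.commute)
      then show ?thesis by simp
    qed
    have t1: "(1 / 2 ^ (3 * n)) *\<^sub>R hA.tri x y z = hA.tri u v w"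
      unfolding u_def v_def w_def hA.tri_scale p3n by (simp add: power_divide)
    have "g (3 * n) (hA.tri x y z) = (8 ^ n) *\<^sub>R f (hA.tri u v w)"
      unfolding g_def by (simp only: t1) (simp only: p3n p8)
    moreover have "hB.tri (g n x) (g n y) (g n z) = (8 ^ n) *\<^sub>R hB.tri (f u) (f v) (f w)"
      unfolding g_def u_def v_def w_def hB.tri_scale p8 ..
    ultimately have "norm (g (3 * n) (hA.tri x y z) - hB.tri (g n x) (g n y) (g n z))
       = 8 ^ n * norm (f (hA.tri u v w) - hB.tri (f u) (f v) (f w))"
      by (simp add: scaleR_diff_right[symmetric])
    also have "\<dots> \<le> 8 ^ n * (\<theta> * (norm u powr p + norm v powr p + norm w powr p))"
      using h2[rule_format, where x=u and y=v and z=w]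
      by (intro mult_left_mono) (auto simp: hA.tri_def hB.tri_def)
    also have "\<dots> = (\<theta> * (norm x powr p + norm y powr p + norm z powr p)) * (8 / q) ^ n"
      unfolding u_def v_def w_def npow power_divide by (rule aux3) (use q8 in simp)
    finally show ?thesis .
  qed
  have r8: "0 \<le> 8 / q" "8 / q < 1" using q8 by auto
  have "(\<lambda>n. g (3 * n) (hA.tri x y z) - hB.tri (g n x) (g n y) (g n z)) \<longlonglongrightarrow> 0"
    by (rule null_geom[OF b r8])
  moreover have "(\<lambda>n. g (3 * n) (hA.tri x y z) - hB.tri (g n x) (g n y) (g n z))
       \<longlonglongrightarrow> H (hA.tri x y z) - hB.tri (H x) (H y) (H z)"
  proof (intro tendsto_diff hB.tri_tendsto glim)
    have "strict_mono (\<lambda>n::nat. 3 * n)" by (simp add: strict_mono_def)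
    from LIMSEQ_subseq_LIMSEQ[OF glim this]
    show "(\<lambda>n. g (3 * n) (hA.tri x y z)) \<longlonglongrightarrow> H (hA.tri x y z)" by (simp add: o_def)
  qed
  ultimately have "H (hA.tri x y z) - hB.tri (H x) (H y) (H z) = 0" using LIMSEQ_unique by blast
  then show ?thesis by simp
qed

lemma uniq:
  assumes a1: "\<And>x y. h1 (x + y) = h1 x + h1 y" and a2: "\<And>x y. h2 (x + y) = h2 x + h2 y"
    and b1: "\<And>x. norm (f x - h1 x) \<le> C * norm x powr p"
    and b2: "\<And>x. norm (f x - h2 x) \<le> C * norm x powr p"
  shows "h1 = h2"
proof
  fix x
  have "norm (h1 x - h2 x) \<le> (2 * C * norm x powr p) * (2 / q) ^ n" for n
  proof -
    define u where "u = (1 / 2 ^ n) *\<^sub>R x"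
    have "h1 x - h2 x = (2 ^ n) *\<^sub>R (h1 u - h2 u)"
      using add_pow2[of h1 x n, OF a1] add_pow2[of h2 x n, OF a2] by (simp add: u_def scaleR_diff_right)
    then have "norm (h1 x - h2 x) = 2 ^ n * norm (h1 u - h2 u)" by simp
    also have "\<dots> \<le> 2 ^ n * (norm (f u - h1 u) + norm (f u - h2 u))"
    proof -
      have "h1 u - h2 u = (f u - h2 u) - (f u - h1 u)" by simp
      then have "norm (h1 u - h2 u) \<le> norm (f u - h1 u) + norm (f u - h2 u)"
        using norm_triangle_ineq4[of "f u - h2 u" "f u - h1 u"] by (simp add: add.commute)
      then show ?thesis by (intro mult_left_mono) auto
    qed
    also have "\<dots> \<le> 2 ^ n * (2 * C * norm u powr p)"
      using b1[of u] b2[of u] by (intro mult_left_mono) auto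
    also have "\<dots> = (2 * C * norm x powr p) * (2 / q) ^ n"
      unfolding u_def npow power_divide by (rule auxu) (use q8 in simp)
    finally show ?thesis .
  qed
  then have "h1 x - h2 x = 0" by (rule zero_geom[OF _ r_props])
  then show "h1 x = h2 x" by simp
qed


end


theorem corollary3p4:
  fixes A :: "('a::{real_normed_algebra,banach}) cstar_ops"
    and M :: "('a, 'x::banach) hmod_ops"
    and B :: "('b::{real_normed_algebra,banach}) cstar_ops"
    and N :: "('b, 'y::banach) hmod_ops"
    and f :: "'x \<Rightarrow> 'y" and p \<theta> :: real
  assumes "hilbert_module A M" and "hilbert_module B N"
    and "p > 3" and "\<theta> \<ge> 0"
    and "\<forall>x y \<mu>. cmod \<mu> = 1 \<longrightarrow>
           norm (f (hscale M \<mu> x + y) - hscale N \<mu> (f x) - f y)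
             \<le> \<theta> * (norm x powr p + norm y powr p)"
    and "\<forall>x y z.
           norm (f (hact M (hip M x y) z) - hact N (hip N (f x) (f y)) (f z))
             \<le> \<theta> * (norm x powr p + norm y powr p + norm z powr p)"
    and "\<forall>x y z.
           norm (f (hact M (cstar A (hip M x y)) z) - hact N (cstar B (hip N (f x) (f y))) (f z))
             \<le> \<theta> * (norm x powr p + norm y powr p + norm z powr p)"
  shows "\<exists>!H. hmod_star_hom A M B N H \<and>
           (\<forall>x. norm (f x - H x) \<le> 2 * \<theta> / (2 powr p - 2 ^ 3) * norm x powr p)"
  proof -
  interpret stab A M B N f p \<theta>
    using assms unfolding stab_def hm_def stab_axioms_def by (intro conjI) assumption+
  show ?thesis
  proof (rule ex_ex1I)
    have star: "H (hact M (cstar A (hip M x y)) z) = hact N (cstar B (hip N (H x) (H y))) (H z)" for x y z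
      unfolding hA.tri_star hB.tri_star by (rule H_tri)
    have hom: "H (hact M (hip M x y) z) = hact N (hip N (H x) (H y)) (H z)" for x y z
      using H_tri[of x y z] by (simp add: hA.tri_def hB.tri_def)
    show "\<exists>H. hmod_star_hom A M B N H \<and>
           (\<forall>x. norm (f x - H x) \<le> 2 * \<theta> / (2 powr p - 2 ^ 3) * norm x powr p)"
      by (rule exI[of _ H], intro conjI allI Hbound) (simp_all add: hmod_star_hom_def hmod_hom_def H_add H_lin star hom)
  next
    fix H1 H2
    assume a: "hmod_star_hom A M B N H1 \<and>
           (\<forall>x. norm (f x - H1 x) \<le> 2 * \<theta> / (2 powr p - 2 ^ 3) * norm x powr p)"
      and b: "hmod_star_hom A M B N H2 \<and>
           (\<forall>x. norm (f x - H2 x) \<le> 2 * \<theta> / (2 powr p - 2 ^ 3) * norm x powr p)"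
    show "H1 = H2"
      by (rule uniq[where C="2 * \<theta> / (2 powr p - 2 ^ 3)"])
        (use a b in \<open>auto simp: hmod_star_hom_def hmod_hom_def\<close>)
  qed
qed

end
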